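(* Let $K$ be a field of characteristic $0$, $\theta=t\frac{d}{dt}$, and let $\mathcal{J}=\theta^5+\sum_{i=0}^4b_i\theta^i\in K(t)[\theta]$ be Calabi-Yau of order $5$. Then there exists a unique Calabi-Yau operator $\mathcal{L}=\theta^4+\sum_{i=0}^3a_i\theta^i\in K(t)[\theta]$ of order $4$ such that $\mathcal{J}$ is the second exterior power of $\mathcal{L}$.
   Context: For monic $\mathcal{L}=\theta^n+\sum_{i<n}a_i\theta^i$: condition (N): $a_i\in K(t)\cap K[[t]]$, $a_i(0)=0$; $\beta$-factor: non-zero solution of $n\,\theta\beta=2a_{n-1}\beta$; formal adjoint $\mathcal{L}^*=(-1)^n\theta^n+\sum_i(-1)^i\theta^ia_i$; self-adjoint: $\mathcal{L}^*=(-1)^n\beta\mathcal{L}\beta^{-1}$; Calabi-Yau: self-adjoint and (N). For order-4 Calabi-Yau $\mathcal{L}$, its second exterior power is the order-5 monic operator $\theta^5+\sum\check a_i\theta^i$ (annihilating $fg'-f'g$ for solutions $f,g$ of $\mathcal{L}$) with, writing $g'=\theta g$: $\check a_4=\tfrac52a_3$, $\check a_3=2a_2+2a_3'+\tfrac74a_3^2$, $\check a_2=-a_1+4a_2'+\tfrac72a_2a_3$, $\check a_1=-4a_0+2a_1'+a_2^2+a_2''+\tfrac32a_1a_3+\tfrac32a_2'a_3+\tfrac14a_2a_3^2$, $\check a_0=-2a_0'+a_1''-2a_0a_3+a_1a_2+\tfrac32a_1'a_3+\tfrac14a_1a_3^2$. *)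

theory Defs
  imports "HOL-Computational_Algebra.Computational_Algebra"
begin

text \<open>Every operator considered
(Calabi-Yau operators satisfy condition (N)) has coefficients in
K(t) \<inter> K[[t]], so coefficients are represented as formal power series,
with the extra requirement that they are rational.  An operator
\<open>\<Sum> c_i \<theta>^i\<close> (coefficients on the left) is represented as the polynomial
\<open>\<Sum> c_i X^i\<close> in \<open>'a fps poly\<close>; composition is the non-commutative product
given by the Leibniz rule.\<close>

definition theta :: "'a::field_char_0 fps \<Rightarrow> 'a fps" where
  "theta f = fps_X * fps_deriv f"

definition opmul :: "'a::field_char_0 fps poly \<Rightarrow> 'a fps poly \<Rightarrow> 'a fps poly" where
  "opmul P Q = (\<Sum>i\<le>degree P. \<Sum>k\<le>i.
      smult (coeff P i * of_nat (i choose k)) (map_poly (theta ^^ k) Q * monom 1 (i - k)))"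

definition monic_op :: "nat \<Rightarrow> 'a::field_char_0 fps poly \<Rightarrow> bool" where
  "monic_op n L \<longleftrightarrow> degree L = n \<and> coeff L n = 1"

definition rational_fps :: "'a::field_char_0 fps \<Rightarrow> bool" where
  "rational_fps a \<longleftrightarrow> (\<exists>p q :: 'a poly. poly q 0 \<noteq> 0 \<and> fps_of_poly q * a = fps_of_poly p)"

definition condN :: "'a::field_char_0 fps poly \<Rightarrow> bool" where
  "condN L \<longleftrightarrow> (\<forall>i<degree L. rational_fps (coeff L i) \<and> fps_nth (coeff L i) 0 = 0)"

definition adjoint :: "'a::field_char_0 fps poly \<Rightarrow> 'a fps poly" where
  "adjoint L = (-1) ^ degree L * monom 1 (degree L)
     + (\<Sum>i<degree L. (-1) ^ i * opmul (monom 1 i) [:coeff L i:])"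

definition beta_factor :: "'a::field_char_0 fps poly \<Rightarrow> 'a fps \<Rightarrow> bool" where
  "beta_factor L \<beta> \<longleftrightarrow> \<beta> \<noteq> 0 \<and>
     of_nat (degree L) * theta \<beta> = 2 * coeff L (degree L - 1) * \<beta>"

definition self_adjoint :: "'a::field_char_0 fps poly \<Rightarrow> bool" where
  "self_adjoint L \<longleftrightarrow> (\<exists>\<beta>. beta_factor L \<beta> \<and>
     adjoint L = (-1) ^ degree L * opmul [:\<beta>:] (opmul L [:inverse \<beta>:]))"

definition calabi_yau :: "nat \<Rightarrow> 'a::field_char_0 fps poly \<Rightarrow> bool" where
  "calabi_yau n L \<longleftrightarrow> monic_op n L \<and> self_adjoint L \<and> condN L"

text \<open>Second exterior power of a monic order-4 operator (explicit formulas).\<close>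
definition ext2 :: "'a::field_char_0 fps poly \<Rightarrow> 'a fps poly" where
  "ext2 L = (let a0 = coeff L 0; a1 = coeff L 1; a2 = coeff L 2; a3 = coeff L 3 in
    [: - 2 * theta a0 + theta (theta a1) - 2 * a0 * a3 + a1 * a2
         + fps_const (3/2) * theta a1 * a3 + fps_const (1/4) * a1 * a3^2,
       - 4 * a0 + 2 * theta a1 + a2^2 + theta (theta a2) + fps_const (3/2) * a1 * a3
         + fps_const (3/2) * theta a2 * a3 + fps_const (1/4) * a2 * a3^2,
       - a1 + 4 * theta a2 + fps_const (7/2) * a2 * a3,
       2 * a2 + 2 * theta a3 + fps_const (7/4) * a3^2,
       fps_const (5/2) * a3,
       1 :])"

end

theory Submission
  imports Defs
begin


lemma theta_add[simp]: "theta (f + g) = theta f + theta g"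
  by (simp add: theta_def algebra_simps)
lemma theta_diff[simp]: "theta (f - g) = theta f - theta g"
  by (simp add: theta_def algebra_simps)
lemma theta_minus[simp]: "theta (- f) = - theta f"
  by (simp add: theta_def)
lemma theta_mult[simp]: "theta (f * g) = theta f * g + f * theta g"
  by (simp add: theta_def algebra_simps)
lemma theta_const[simp]: "theta (fps_const c) = 0"
  by (simp add: theta_def)
lemma theta_0[simp]: "theta 0 = 0"
  by (simp add: theta_def)
lemma theta_1[simp]: "theta 1 = 0"
  by (simp add: theta_def)
lemma theta_numeral[simp]: "theta (numeral n) = 0"
  by (simp add: theta_def)
lemma theta_nth0[simp]: "theta f $ 0 = 0"
  by (simp add: theta_def)

lemma funpow_theta_0[simp]: "(theta ^^ k) 0 = 0"
  by (induct k) auto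

lemma coeff_opmul_const:
  "coeff (opmul P [:c:]) j =
    (\<Sum>i\<le>degree P. if j \<le> i then coeff P i * of_nat (i choose (i - j)) * (theta ^^ (i - j)) c else 0)"
proof -
  have mp: "map_poly (theta ^^ k) [:c:] = [:(theta ^^ k) c:]" for k
    by (simp add: map_poly_pCons)
  have inner: "(\<Sum>k\<le>i. coeff (smult (coeff P i * of_nat (i choose k)) ([:(theta ^^ k) c:] * monom 1 (i - k))) j)
     = (if j \<le> i then coeff P i * of_nat (i choose (i - j)) * (theta ^^ (i - j)) c else 0)" for i
  proof -
    have "(\<Sum>k\<le>i. coeff (smult (coeff P i * of_nat (i choose k)) ([:(theta ^^ k) c:] * monom 1 (i - k))) j)
        = (\<Sum>k\<le>i. if k = i - j \<and> j \<le> i then coeff P i * of_nat (i choose k) * (theta ^^ k) c else 0)"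
      by (rule sum.cong) (auto simp: smult_monom)
    also have "\<dots> = (if j \<le> i then coeff P i * of_nat (i choose (i - j)) * (theta ^^ (i - j)) c else 0)"
      by (cases "j \<le> i") (auto simp: sum.delta)
    finally show ?thesis .
  qed
  show ?thesis
    unfolding opmul_def coeff_sum mp using inner by simp
qed

lemma opmul_const_left: "opmul [:b:] P = smult b P"
  by (simp add: opmul_def)

lemma neg1_pow_mult_coeff: fixes p :: "'b::comm_ring_1 poly" shows "coeff ((-1) ^ i * p) j = (-1) ^ i * coeff p j"
proof -
  have "(-1 :: 'b::comm_ring_1 poly) ^ i = [:(-1) ^ i:]" by (induct i) auto
  then show ?thesis by (simp only:) simp
qed

lemma coeff_adjoint: fixes L :: "'a::field_char_0 fps poly" shows
  "coeff (adjoint L) j = (-1) ^ degree L * (if j = degree L then 1 else 0)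
     + (\<Sum>i<degree L. (-1) ^ i * (if j \<le> i then of_nat (i choose (i - j)) * (theta ^^ (i - j)) (coeff L i) else 0))"
proof -
  have d: "degree (monom 1 i :: 'a fps poly) = i" for i by (rule degree_monom_eq) simp
  have c: "coeff (opmul (monom 1 i) [:a:]) j = (if j \<le> i then of_nat (i choose (i - j)) * (theta ^^ (i - j)) a else 0)" for i and a :: "'a fps"
  proof -
    have "coeff (opmul (monom 1 i) [:a:]) j = (\<Sum>ia\<le>i. if ia = i then (if j \<le> ia then of_nat (ia choose (ia - j)) * (theta ^^ (ia - j)) a else 0) else 0)"
      unfolding coeff_opmul_const d by (rule sum.cong) auto
    then show ?thesis by (simp only: sum.delta) simp
  qed
  show ?thesis unfolding adjoint_def coeff_add coeff_sum neg1_pow_mult_coeff c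
    by simp
qed

lemma coeff_conj:
  "coeff (opmul [:b:] (opmul L [:g:])) j =
    b * (\<Sum>i\<le>degree L. if j \<le> i then coeff L i * of_nat (i choose (i - j)) * (theta ^^ (i - j)) g else 0)"
  unfolding opmul_const_left coeff_smult coeff_opmul_const ..



fun E :: "'a::field_char_0 fps \<Rightarrow> nat \<Rightarrow> 'a fps" where
  "E c 0 = 1" | "E c (Suc k) = theta (E c k) - c * E c k"

lemma funpow_theta_E:
  assumes "theta g = - c * g" shows "(theta ^^ k) g = E c k * g"
  by (induct k) (auto simp: assms algebra_simps)

lemma coeff_conj_E:
  assumes "theta g = - c * g" "b * g = 1"
  shows "coeff (opmul [:b:] (opmul L [:g:])) j =
    (\<Sum>i\<le>degree L. if j \<le> i then coeff L i * of_nat (i choose (i - j)) * E c (i - j) else 0)"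
  unfolding coeff_conj funpow_theta_E[OF assms(1)] sum_distrib_left
proof (rule sum.cong)
  fix i show "b * (if j \<le> i then coeff L i * of_nat (i choose (i - j)) * (E c (i - j) * g) else 0) =
         (if j \<le> i then coeff L i * of_nat (i choose (i - j)) * E c (i - j) else 0)"
    using assms(2) by (auto simp: algebra_simps)
qed simp

lemma theta_inverse:
  fixes \<beta> :: "'a::field_char_0 fps"
  assumes b0: "\<beta> $ 0 \<noteq> 0" and tb: "theta \<beta> = c * \<beta>"
  shows "theta (inverse \<beta>) = - c * inverse \<beta>" and "\<beta> * inverse \<beta> = 1"
proof -
  show inv: "\<beta> * inverse \<beta> = 1" using b0 by (simp add: inverse_mult_eq_1')
  have "theta (\<beta> * inverse \<beta>) = 0" by (simp add: inv)
  then have "\<beta> * (theta (inverse \<beta>) + c * inverse \<beta>) = 0"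
    by (simp add: tb algebra_simps)
  moreover have "\<beta> \<noteq> 0" using b0 by auto
  ultimately have "theta (inverse \<beta>) + c * inverse \<beta> = 0" by simp
  then show "theta (inverse \<beta>) = - c * inverse \<beta>"
    by (simp add: eq_neg_iff_add_eq_0)
qed

lemma L_self_adjoint:
  fixes u a0 a1 a2 \<beta> :: "'a::field_char_0 fps"
  assumes b0: "\<beta> $ 0 \<noteq> 0" and tb: "theta \<beta> = u * \<beta>"
    and X: "a1 = a2*u + theta a2 - 3*u*theta u - u^3 - theta (theta u)"
  shows "self_adjoint [:a0,a1,a2,2*u,1:]"
proof -
  define L where "L = [:a0,a1,a2,2*u,1:]"
  have dL: "degree L = 4" by (simp add: L_def eval_nat_numeral)
  note ti = theta_inverse[OF b0 tb]
  have bf: "beta_factor L \<beta>"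
    unfolding beta_factor_def dL using b0 by (auto simp: L_def tb eval_nat_numeral algebra_simps)
  have "coeff (adjoint L) j = coeff ((-1) ^ degree L * opmul [:\<beta>:] (opmul L [:inverse \<beta>:])) j" for j
  proof -
    have r: "coeff ((-1) ^ degree L * opmul [:\<beta>:] (opmul L [:inverse \<beta>:])) j
      = (\<Sum>i\<le>4. if j \<le> i then coeff L i * of_nat (i choose (i - j)) * E u (i - j) else 0)"
      unfolding neg1_pow_mult_coeff coeff_conj_E[OF ti] dL by simp
    define lhs where "lhs j = (- 1) ^ 4 * (if j = 4 then 1 else 0) +
    (\<Sum>i<4. (- 1) ^ i * (if j \<le> i then of_nat (i choose (i - j)) * (theta ^^ (i - j)) (coeff L i) else 0))" for j
    define rhs where "rhs j = (\<Sum>i\<le>4. if j \<le> i then coeff L i * of_nat (i choose (i - j)) * E u (i - j) else 0)" for j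
    have e0: "lhs 0 = rhs 0" unfolding lhs_def rhs_def by (simp add: L_def eval_nat_numeral X; algebra)
    have e1: "lhs 1 = rhs 1" unfolding lhs_def rhs_def by (simp add: L_def eval_nat_numeral X; algebra)
    have e2: "lhs 2 = rhs 2" unfolding lhs_def rhs_def by (simp add: L_def eval_nat_numeral X; algebra)
    have e3: "lhs 3 = rhs 3" unfolding lhs_def rhs_def by (simp add: L_def eval_nat_numeral X; algebra)
    have e4: "lhs 4 = rhs 4" unfolding lhs_def rhs_def by (simp add: L_def eval_nat_numeral X; algebra)
    have e5: "lhs j = rhs j" if "j > 4" unfolding lhs_def rhs_def using that by simp
    have lr: "lhs j = rhs j"
    proof -
      consider "j = 0" | "j = 1" | "j = 2" | "j = 3" | "j = 4" | "j > 4" by linarith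
      then show ?thesis using e0 e1 e2 e3 e4 e5 by cases auto
    qed
    have la: "coeff (adjoint L) j = lhs j" unfolding coeff_adjoint dL lhs_def ..
    have r': "coeff ((-1) ^ degree L * opmul [:\<beta>:] (opmul L [:inverse \<beta>:])) j = rhs j"
      unfolding rhs_def by (rule r)
    show ?thesis using la r' lr by simp
  qed
  then have "adjoint L = (-1) ^ degree L * opmul [:\<beta>:] (opmul L [:inverse \<beta>:])"
    by (simp add: poly_eq_iff)
  then show ?thesis unfolding L_def[symmetric] self_adjoint_def using bf by blast
qed



lemma rat_const[simp]: "rational_fps (fps_const c)"
  unfolding rational_fps_def by (rule exI[of _ "[:c:]"], rule exI[of _ 1]) (simp add: fps_of_poly_const)

lemma rat_add: "rational_fps a \<Longrightarrow> rational_fps b \<Longrightarrow> rational_fps (a + b)"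
  unfolding rational_fps_def
proof (elim exE conjE)
  fix p q p' q' :: "'a poly"
  assume h: "poly q 0 \<noteq> 0" "fps_of_poly q * a = fps_of_poly p" "poly q' 0 \<noteq> 0" "fps_of_poly q' * b = fps_of_poly p'"
  show "\<exists>p q. poly q 0 \<noteq> 0 \<and> fps_of_poly q * (a + b) = fps_of_poly p"
    apply (rule exI[of _ "q' * p + q * p'"], rule exI[of _ "q * q'"])
  proof (intro conjI)
    show "poly (q * q') 0 \<noteq> 0" using h by simp
    have "fps_of_poly (q * q') * (a + b) = fps_of_poly q' * (fps_of_poly q * a) + fps_of_poly q * (fps_of_poly q' * b)"
      by (simp add: fps_of_poly_mult algebra_simps)
    then show "fps_of_poly (q * q') * (a + b) = fps_of_poly (q' * p + q * p')"
      using h by (simp add: fps_of_poly_mult fps_of_poly_add)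
  qed
qed

lemma rat_mult: "rational_fps a \<Longrightarrow> rational_fps b \<Longrightarrow> rational_fps (a * b)"
  unfolding rational_fps_def
proof (elim exE conjE)
  fix p q p' q' :: "'a poly"
  assume h: "poly q 0 \<noteq> 0" "fps_of_poly q * a = fps_of_poly p" "poly q' 0 \<noteq> 0" "fps_of_poly q' * b = fps_of_poly p'"
  show "\<exists>p q. poly q 0 \<noteq> 0 \<and> fps_of_poly q * (a * b) = fps_of_poly p"
    apply (rule exI[of _ "p * p'"], rule exI[of _ "q * q'"])
  proof (intro conjI)
    show "poly (q * q') 0 \<noteq> 0" using h by simp
    have "fps_of_poly (q * q') * (a * b) = (fps_of_poly q * a) * (fps_of_poly q' * b)"
      by (simp add: fps_of_poly_mult algebra_simps)
    then show "fps_of_poly (q * q') * (a * b) = fps_of_poly (p * p')"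
      using h by (simp add: fps_of_poly_mult)
  qed
qed

lemma rat_neg: "rational_fps a \<Longrightarrow> rational_fps (- a)"
proof -
  assume "rational_fps a"
  then have "rational_fps (fps_const (-1) * a)" by (rule rat_mult[OF rat_const])
  moreover have "fps_const (-1) * a = - a" by (simp flip: fps_const_neg)
  ultimately show ?thesis by simp
qed

lemma rat_diff: "rational_fps a \<Longrightarrow> rational_fps b \<Longrightarrow> rational_fps (a - b)"
  using rat_add[OF _ rat_neg, of a b] by (simp only: diff_conv_add_uminus)

lemma rat_numeral[simp]: "rational_fps (numeral n)"
  by (subst numeral_fps_const) (rule rat_const)

lemma rat_one[simp]: "rational_fps 1"
  using rat_const[of 1] by simp

lemma rat_power: "rational_fps a \<Longrightarrow> rational_fps (a ^ n)"
  by (induct n) (auto intro: rat_mult)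

lemma theta_fps_of_poly: "theta (fps_of_poly p) = fps_of_poly ([:0,1:] * pderiv p)"
  by (simp only: theta_def fps_of_poly_mult fps_of_poly_fps_X fps_of_poly_pderiv)

lemma rat_theta: "rational_fps a \<Longrightarrow> rational_fps (theta a)"
  unfolding rational_fps_def
proof (elim exE conjE)
  fix p q :: "'a poly"
  assume h: "poly q 0 \<noteq> 0" "fps_of_poly q * a = fps_of_poly p"
  have "theta (fps_of_poly q * a) = theta (fps_of_poly p)" using h by simp
  then have e: "theta (fps_of_poly q) * a + fps_of_poly q * theta a = theta (fps_of_poly p)" by simp
  show "\<exists>p' q'. poly q' 0 \<noteq> 0 \<and> fps_of_poly q' * theta a = fps_of_poly p'"
  proof (rule exI[of _ "q * ([:0,1:] * pderiv p) - ([:0,1:] * pderiv q) * p"], rule exI[of _ "q * q"], intro conjI)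
    show "poly (q * q) 0 \<noteq> 0" using h by simp
    have "fps_of_poly q * (fps_of_poly q * theta a) = fps_of_poly q * (theta (fps_of_poly p) - theta (fps_of_poly q) * a)"
    proof -
      have e': "fps_of_poly q * theta a = theta (fps_of_poly p) - theta (fps_of_poly q) * a"
        using e by (simp add: eq_diff_eq add.commute)
      show ?thesis by (simp only: e')
    qed
    also have "\<dots> = fps_of_poly q * theta (fps_of_poly p) - theta (fps_of_poly q) * fps_of_poly p"
    proof -
      have "fps_of_poly q * (theta (fps_of_poly p) - theta (fps_of_poly q) * a)
          = fps_of_poly q * theta (fps_of_poly p) - theta (fps_of_poly q) * (fps_of_poly q * a)"
        by (simp add: algebra_simps)
      then show ?thesis using h(2) by simp
    qed
    finally show "fps_of_poly (q * q) * theta a = fps_of_poly (q * ([:0,1:] * pderiv p) - ([:0,1:] * pderiv q) * p)"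
      by (simp add: fps_of_poly_mult fps_of_poly_diff theta_fps_of_poly mult.assoc)
  qed
qed

lemmas rat_intros = rat_add rat_mult rat_neg rat_diff rat_theta rat_power rat_const rat_numeral rat_one

lemma nth0_nonzero:
  fixes \<beta> c :: "'a::field_char_0 fps"
  assumes "theta \<beta> = c * \<beta>" "c $ 0 = 0" "\<beta> \<noteq> 0"
  shows "\<beta> $ 0 \<noteq> 0"
proof
  assume z: "\<beta> $ 0 = 0"
  define m where "m = subdegree \<beta>"
  have nz: "\<beta> $ m \<noteq> 0" using assms(3) m_def by simp
  have m0: "m \<noteq> 0"
  proof
    assume "m = 0" then show False using z nz by simp
  qed
  have lt: "\<beta> $ k = 0" if "k < m" for k using that m_def by auto
  have "(c * \<beta>) $ m = (\<Sum>i=0..m. c $ i * \<beta> $ (m - i))" by (rule fps_mult_nth)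
  also have "\<dots> = 0"
  proof (rule sum.neutral, intro ballI)
    fix i assume "i \<in> {0..m}"
    show "c $ i * \<beta> $ (m - i) = 0" using assms(2) lt[of "m - i"] m0 by (cases "i = 0") auto
  qed
  finally have "theta \<beta> $ m = 0" using assms(1) by simp
  moreover have "theta \<beta> $ m = of_nat m * \<beta> $ m"
    using m0 by (cases m) (auto simp: theta_def)
  ultimately show False using nz m0 by simp
qed

lemma beta_exists:
  fixes c :: "'a::field_char_0 fps"
  assumes "c $ 0 = 0"
  shows "\<exists>\<beta>. \<beta> $ 0 \<noteq> 0 \<and> theta \<beta> = c * \<beta>"
proof -
  define g where "g = fps_integral (fps_shift 1 c) 0"
  have g0: "g $ 0 = 0" by (simp add: g_def fps_integral_def)
  define \<beta> where "\<beta> = fps_exp (1::'a) oo g"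
  have sh: "fps_X * fps_shift 1 c = c"
  proof (rule fps_ext)
    fix n show "(fps_X * fps_shift 1 c) $ n = c $ n" using assms by (cases n) auto
  qed
  have "fps_deriv \<beta> = \<beta> * fps_shift 1 c"
    unfolding \<beta>_def using g0 by (simp add: fps_compose_deriv g_def fps_deriv_fps_integral)
  then have "theta \<beta> = c * \<beta>" unfolding theta_def using sh by (simp add: algebra_simps)
  moreover have "\<beta> $ 0 \<noteq> 0" by (simp add: \<beta>_def)
  ultimately show ?thesis by blast
qed



lemma J_conds:
  fixes J :: "'a::field_char_0 fps poly" and b0 a0 a1 a2 u :: "'a fps"
  assumes sa: "self_adjoint J"
    and J: "J = [:b0, -4*a0 + 2*theta a1 + a2*a2 + theta (theta a2) + 3*a1*u + 3*theta a2*u + a2*u*u,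
                 -a1 + 4*theta a2 + 7*a2*u, 2*a2 + 4*theta u + 7*u^2, 5*u, 1:]"
    and u0: "u $ 0 = 0"
  shows "a1 = a2*u + theta a2 - 3*u*theta u - u^3 - theta (theta u)"
    and "b0 = -2*theta a0 + theta (theta a1) - 4*a0*u + a1*a2 + 3*theta a1*u + a1*u^2"
proof -
  have dJ: "degree J = 5" by (simp add: J eval_nat_numeral)
  obtain \<beta> where bf: "beta_factor J \<beta>"
    and eq: "adjoint J = (-1) ^ degree J * opmul [:\<beta>:] (opmul J [:inverse \<beta>:])"
    using sa unfolding self_adjoint_def by blast
  have bnz: "\<beta> \<noteq> 0" and "of_nat 5 * theta \<beta> = 2 * coeff J 4 * \<beta>"
    using bf unfolding beta_factor_def dJ by auto
  then have "5 * theta \<beta> = 5 * ((2 * u) * \<beta>)" by (simp add: J eval_nat_numeral algebra_simps)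
  then have "(5::'a fps) = 0 \<or> theta \<beta> = (2 * u) * \<beta>" by (simp only: mult_cancel_left)
  then have tb: "theta \<beta> = (2 * u) * \<beta>" by simp
  have b00: "\<beta> $ 0 \<noteq> 0" by (rule nth0_nonzero[OF tb _ bnz]) (simp add: u0)
  note ti = theta_inverse[OF b00 tb]
  define lhs where "lhs j = (- 1) ^ 5 * (if j = 5 then 1 else 0) +
    (\<Sum>i<5. (- 1) ^ i * (if j \<le> i then of_nat (i choose (i - j)) * (theta ^^ (i - j)) (coeff J i) else 0))" for j
  define rhs where "rhs j = (\<Sum>i\<le>5. if j \<le> i then coeff J i * of_nat (i choose (i - j)) * E (2 * u) (i - j) else 0)" for j
  have EQ: "lhs j = (-1) ^ 5 * rhs j" for j
  proof -
    have "coeff (adjoint J) j = coeff ((-1) ^ degree J * opmul [:\<beta>:] (opmul J [:inverse \<beta>:])) j"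
      by (simp only: eq)
    then show ?thesis
      unfolding coeff_adjoint neg1_pow_mult_coeff coeff_conj_E[OF ti] dJ lhs_def rhs_def .
  qed
  have "2 * a1 = 2 * (a2*u + theta a2 - 3*u*theta u - u^3 - theta (theta u))"
    using EQ[of 2] unfolding lhs_def rhs_def by (simp add: J eval_nat_numeral; algebra)
  then have "(2::'a fps) = 0 \<or> a1 = a2*u + theta a2 - 3*u*theta u - u^3 - theta (theta u)" by (simp only: mult_cancel_left)
  then show X: "a1 = a2*u + theta a2 - 3*u*theta u - u^3 - theta (theta u)" by simp
  have "2 * b0 = 2 * (-2*theta a0 + theta (theta a1) - 4*a0*u + a1*a2 + 3*theta a1*u + a1*u^2)"
    using EQ[of 0] unfolding lhs_def rhs_def by (simp add: J eval_nat_numeral X; algebra)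
  then have "(2::'a fps) = 0 \<or> b0 = -2*theta a0 + theta (theta a1) - 4*a0*u + a1*a2 + 3*theta a1*u + a1*u^2" by (simp only: mult_cancel_left)
  then show "b0 = -2*theta a0 + theta (theta a1) - 4*a0*u + a1*a2 + 3*theta a1*u + a1*u^2" by simp
qed



lemma ext2_u:
  fixes a0 a1 a2 u :: "'a::field_char_0 fps"
  shows "ext2 [:a0, a1, a2, 2*u, 1:] =
    [:-2*theta a0 + theta (theta a1) - 4*a0*u + a1*a2 + 3*theta a1*u + a1*u^2,
      -4*a0 + 2*theta a1 + a2*a2 + theta (theta a2) + 3*a1*u + 3*theta a2*u + a2*u*u,
      -a1 + 4*theta a2 + 7*a2*u, 2*a2 + 4*theta u + 7*u^2, 5*u, 1:]"
proof -
  have k: "fps_const (3/2) * 2 = (3::'a fps)" "fps_const (1/4) * 4 = (1::'a fps)"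
     "fps_const (7/2) * 2 = (7::'a fps)" "fps_const (7/4) * 4 = (7::'a fps)" "fps_const (5/2) * 2 = (5::'a fps)"
    by (simp_all add: numeral_fps_const)
  show ?thesis
    apply (simp add: ext2_def Let_def eval_nat_numeral)
    apply (intro conjI)
    apply (simp_all add: numeral_fps_const algebra_simps)
    done
qed

lemma ext2_inj:
  fixes L1 L2 :: "'a::field_char_0 fps poly"
  assumes m1: "monic_op 4 L1" and m2: "monic_op 4 L2" and e: "ext2 L1 = ext2 L2"
  shows "L1 = L2"
proof -
  have ce: "coeff (ext2 L1) k = coeff (ext2 L2) k" for k using e by simp
  have c3: "coeff L1 3 = coeff L2 3"
    using ce[of 4] by (simp add: ext2_def Let_def eval_nat_numeral)
  have c2: "coeff L1 2 = coeff L2 2"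
    using ce[of 3] c3 by (simp add: ext2_def Let_def eval_nat_numeral)
  have c1: "coeff L1 1 = coeff L2 1"
    using ce[of 2] c3 c2 by (simp add: ext2_def Let_def eval_nat_numeral)
  have c0: "coeff L1 0 = coeff L2 0"
    using ce[of 1] c3 c2 c1 by (simp add: ext2_def Let_def eval_nat_numeral)
  have "coeff L1 n = coeff L2 n" for n
  proof -
    consider "n = 0" | "n = 1" | "n = 2" | "n = 3" | "n = 4" | "n > 4" by linarith
    then show ?thesis
    proof cases
      case 5 then show ?thesis using m1 m2 by (simp add: monic_op_def)
    next
      case 6 then show ?thesis using m1 m2 by (simp add: monic_op_def coeff_eq_0)
    qed (use c0 c1 c2 c3 in simp_all)
  qed
  then show ?thesis by (simp add: poly_eq_iff)
qed



theorem proposition1p9: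
  fixes J :: "'a::field_char_0 fps poly"
  assumes "calabi_yau 5 J"
  shows "\<exists>!L :: 'a fps poly. calabi_yau 4 L \<and> ext2 L = J"
proof -
  have mJ: "monic_op 5 J" and sJ: "self_adjoint J" and nJ: "condN J"
    using assms by (auto simp: calabi_yau_def)
  have dJ: "degree J = 5" and lJ: "coeff J 5 = 1" using mJ by (auto simp: monic_op_def)
  have lJ': "coeff J (Suc (Suc (Suc (Suc (Suc 0))))) = 1" using lJ by (simp add: eval_nat_numeral)
  define b0 where "b0 = coeff J 0"
  define b1 where "b1 = coeff J 1"
  define b2 where "b2 = coeff J 2"
  define b3 where "b3 = coeff J 3"
  define b4 where "b4 = coeff J 4"
  have rb: "rational_fps (coeff J i)" and zb: "coeff J i $ 0 = 0" if "i < 5" for i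
    using nJ that dJ by (auto simp: condN_def)
  define u where "u = fps_const (1/5) * b4"
  define a2 where "a2 = fps_const (1/2) * (b3 - 4 * theta u - 7 * u^2)"
  define a1 where "a1 = - (b2 - 4 * theta a2 - 7 * a2 * u)"
  define a0 where "a0 = fps_const (1/4) * (- b1 + 2*theta a1 + a2*a2 + theta (theta a2) + 3*a1*u + 3*theta a2*u + a2*u*u)"
  define L where "L = [:a0, a1, a2, 2*u, 1:]"
  have Jb: "J = [:b0, b1, b2, b3, b4, 1:]"
  proof -
    have "coeff J n = coeff [:b0, b1, b2, b3, b4, 1:] n" for n
    proof -
      consider "n = 0" | "n = 1" | "n = 2" | "n = 3" | "n = 4" | "n = 5" | "n > 5" by linarith
      then show ?thesis
        by cases (simp_all add: b0_def b1_def b2_def b3_def b4_def lJ' coeff_eq_0 dJ eval_nat_numeral)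
    qed
    then show ?thesis by (simp add: poly_eq_iff)
  qed
  have k5: "fps_const (1/5) * 5 = (1::'a fps)" and k2: "fps_const (1/2) * 2 = (1::'a fps)"
    and k4: "fps_const (1/4) * 4 = (1::'a fps)"
    by (simp_all add: numeral_fps_const)
  have e4: "b4 = 5 * u" unfolding u_def by (simp add: numeral_fps_const)
  have e3: "b3 = 2*a2 + 4*theta u + 7*u^2" unfolding a2_def by (simp add: numeral_fps_const algebra_simps)
  have e2: "b2 = -a1 + 4*theta a2 + 7*a2*u" unfolding a1_def by (simp add: algebra_simps)
  have e1: "b1 = -4*a0 + 2*theta a1 + a2*a2 + theta (theta a2) + 3*a1*u + 3*theta a2*u + a2*u*u"
  proof -
    have k4': "4 * fps_const (1/4) = (1::'a fps)" by (simp add: numeral_fps_const)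
    have "4 * a0 = - b1 + 2*theta a1 + a2*a2 + theta (theta a2) + 3*a1*u + 3*theta a2*u + a2*u*u"
      unfolding a0_def by (simp only: mult.assoc[symmetric] k4') simp
    then show ?thesis by algebra
  qed
  have J': "J = [:b0, -4*a0 + 2*theta a1 + a2*a2 + theta (theta a2) + 3*a1*u + 3*theta a2*u + a2*u*u,
                 -a1 + 4*theta a2 + 7*a2*u, 2*a2 + 4*theta u + 7*u^2, 5*u, 1:]"
    using Jb e1 e2 e3 e4 by simp
  have u0: "u $ 0 = 0" using zb[of 4] by (simp add: u_def b4_def)
  note JC = J_conds[OF sJ J' u0]
  have ext: "ext2 L = J" unfolding L_def ext2_u J' JC(2) ..
  have mL: "monic_op 4 L" by (simp add: L_def monic_op_def eval_nat_numeral)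
  obtain \<beta> where "\<beta> $ 0 \<noteq> 0" "theta \<beta> = u * \<beta>" using beta_exists[OF u0] by blast
  then have saL: "self_adjoint L" unfolding L_def by (rule L_self_adjoint[OF _ _ JC(1)])
  have ru: "rational_fps u" unfolding u_def b4_def by (intro rat_intros rb) simp
  have ra2: "rational_fps a2" unfolding a2_def b3_def by (intro rat_intros rb ru) simp
  have ra1: "rational_fps a1" unfolding a1_def b2_def by (intro rat_intros rb ru ra2) simp
  have ra0: "rational_fps a0" unfolding a0_def b1_def by (intro rat_intros rb ru ra2 ra1) simp
  have za2: "a2 $ 0 = 0" using zb[of 3] u0 by (simp add: a2_def b3_def theta_def)
  have za1: "a1 $ 0 = 0" using zb[of 2] u0 za2 by (simp add: a1_def b2_def theta_def)
  have za0: "a0 $ 0 = 0" using zb[of 1] u0 za2 za1 by (simp add: a0_def b1_def theta_def)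
  have nL: "condN L"
    unfolding condN_def
  proof (intro allI impI)
    fix i assume "i < degree L"
    then have "i < 4" by (simp add: L_def eval_nat_numeral)
    then consider "i = 0" | "i = 1" | "i = 2" | "i = 3" by linarith
    then show "rational_fps (coeff L i) \<and> coeff L i $ 0 = 0"
      by cases (auto simp: L_def eval_nat_numeral ra0 ra1 ra2 za0 za1 za2 u0 intro: rat_intros ru)
  qed
  have P: "calabi_yau 4 L \<and> ext2 L = J" using mL saL nL ext by (simp add: calabi_yau_def)
  show ?thesis
  proof (rule ex1I[of _ L])
    show "calabi_yau 4 L \<and> ext2 L = J" by (rule P)
  next
    fix L' assume "calabi_yau 4 L' \<and> ext2 L' = J"
    then show "L' = L" using ext2_inj[of L' L] mL ext by (auto simp: calabi_yau_def)
  qed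
qed

end
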